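(* Let $\rho\in(0,1)$ and $k\ge1$ an integer. Let $\beta_\rho=\frac{\sqrt{1+\rho}-\sqrt{1-\rho}}{\sqrt{1+\rho}+\sqrt{1-\rho}}$, $\rho_1=\frac{2\beta_\rho^k}{1+\beta_\rho^{2k}}$ and $$C_1=\frac{\rho_1}{2\rho^k}\Big(\big(1-\sqrt{1+\rho^2}\big)^k+\big(1+\sqrt{1+\rho^2}\big)^k\Big).$$ Then $\tilde\rho(C_1)\le\rho_1$.
   Context: $\mathbb{R}_k[X]$ denotes real polynomials of degree at most $k$, and $\|p\|_1$ is the sum of absolute values of the coefficients of $p$. For $C\ge1$, $\tilde\rho(C)=\min\{\max_{x\in[0,\rho]}|p(x)| : p\in\mathbb{R}_k[X],\ p(1)=1,\ \|p\|_1\le C\}$. *)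

theory Defs
  imports "HOL-Analysis.Analysis" "HOL-Computational_Algebra.Polynomial"
begin

definition l1_norm :: "real poly \<Rightarrow> real" where
  "l1_norm p = (\<Sum>i\<le>degree p. \<bar>coeff p i\<bar>)"

text \<open>The minimal value of the sup-norm on [0,rho] over polynomials of degree at most k
  with p(1) = 1 and l1-norm at most C (the paper writes min; the min is attained,
  we use Inf).\<close>
definition tilde_rho :: "nat \<Rightarrow> real \<Rightarrow> real \<Rightarrow> real" where
  "tilde_rho k rho C =
     Inf {Sup ((\<lambda>x. \<bar>poly p x\<bar>) ` {0..rho}) | p.
            degree p \<le> k \<and> poly p 1 = 1 \<and> l1_norm p \<le> C}"

end

theory Submission
  imports Defs
begin

fun Q :: "real \<Rightarrow> nat \<Rightarrow> real poly" where
  "Q c 0 = 1"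
| "Q c (Suc 0) = [:0, c:]"
| "Q c (Suc (Suc n)) = smult 2 [:0, c:] * Q c (Suc n) - Q c n"

fun S :: "real \<Rightarrow> nat \<Rightarrow> real" where
  "S c 0 = 1"
| "S c (Suc 0) = c"
| "S c (Suc (Suc n)) = 2 * c * S c (Suc n) + S c n"

lemma Q_degree: "degree (Q c n) \<le> n"
proof (induction c n rule: Q.induct)
  case (3 c n)
  have "degree (smult 2 [:0, c:] * Q c (Suc n)) \<le> Suc (Suc n)"
  proof -
    have "degree (smult 2 [:0, c:]) \<le> 1" by (simp add: degree_pCons_le)
    then show ?thesis
      using degree_mult_le[of "smult 2 [:0, c:]" "Q c (Suc n)"] 3(1) by linarith
  qed
  moreover have "degree (Q c n) \<le> Suc (Suc n)" using 3(2) by simp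
  ultimately show ?case by (simp only: Q.simps) (rule degree_diff_le)
qed auto

lemma Q_cos: "c * x = cos t \<Longrightarrow> poly (Q c n) x = cos (real n * t)"
proof (induction c n rule: Q.induct)
  case (3 c n)
  have "cos (real (Suc (Suc n)) * t) = 2 * cos t * cos (real (Suc n) * t) - cos (real n * t)"
    using cos_add[of "real (Suc n) * t" t] cos_diff[of "real (Suc n) * t" t]
    by (simp add: algebra_simps)
  moreover have "poly (Q c (Suc (Suc n))) x = 2 * (c * x) * poly (Q c (Suc n)) x - poly (Q c n) x"
    by (simp add: algebra_simps)
  ultimately show ?case using 3 by simp
qed (simp_all add: mult.commute)

lemma Q_closed: "u + v = 2 * c * x \<Longrightarrow> u * v = 1 \<Longrightarrow> poly (Q c n) x = (u ^ n + v ^ n) / 2"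
proof (induction c n rule: Q.induct)
  case (3 c n)
  have "u^2 = u * (u + v) - u * v" "v^2 = v * (u + v) - u * v" by (simp_all add: power2_eq_square algebra_simps)
  then have u: "u^2 = 2*c*x*u - 1" and v: "v^2 = 2*c*x * v - 1" using 3(3,4) by (simp_all add: algebra_simps)
  have "u ^ Suc (Suc n) = u^2 * u^n" "v ^ Suc (Suc n) = v^2 * v^n" by (simp_all add: power2_eq_square)
  then show ?case using 3 u v by (simp add: algebra_simps)
qed auto

lemma S_closed: "u + v = 2 * c \<Longrightarrow> u * v = -1 \<Longrightarrow> S c n = (u ^ n + v ^ n) / 2"
proof (induction c n rule: S.induct)
  case (3 c n)
  have "u^2 = u * (u + v) - u * v" "v^2 = v * (u + v) - u * v" by (simp_all add: power2_eq_square algebra_simps)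
  then have u: "u^2 = 2*c*u + 1" and v: "v^2 = 2*c * v + 1" using 3(3,4) by (simp_all add: algebra_simps)
  have "u ^ Suc (Suc n) = u^2 * u^n" "v ^ Suc (Suc n) = v^2 * v^n" by (simp_all add: power2_eq_square)
  then show ?case using 3 u v by (simp add: algebra_simps)
qed auto

lemma l1_ext: "degree p \<le> N \<Longrightarrow> l1_norm p = (\<Sum>i\<le>N. \<bar>coeff p i\<bar>)"
  unfolding l1_norm_def
  by (rule sum.mono_neutral_left) (auto simp: coeff_eq_0)

lemma l1_diff: "l1_norm (p - q) \<le> l1_norm p + l1_norm q"
proof -
  define N where "N = max (degree p) (degree q)"
  have "degree (p - q) \<le> N" unfolding N_def by (rule degree_diff_le) auto
  then have "l1_norm (p - q) = (\<Sum>i\<le>N. \<bar>coeff p i - coeff q i\<bar>)" by (simp add: l1_ext)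
  also have "\<dots> \<le> (\<Sum>i\<le>N. \<bar>coeff p i\<bar> + \<bar>coeff q i\<bar>)" by (rule sum_mono) (rule abs_triangle_ineq4)
  also have "\<dots> = l1_norm p + l1_norm q"
    by (simp add: sum.distrib l1_ext[of p N] l1_ext[of q N] N_def)
  finally show ?thesis .
qed

lemma l1_smult: "l1_norm (smult a p) = \<bar>a\<bar> * l1_norm p"
proof -
  have "l1_norm (smult a p) = (\<Sum>i\<le>degree p. \<bar>coeff (smult a p) i\<bar>)"
    by (rule l1_ext) (rule degree_smult_le)
  then show ?thesis by (simp add: l1_norm_def sum_distrib_left abs_mult)
qed

lemma l1_pCons0: "l1_norm (pCons 0 q) = l1_norm q"
proof -
  have "l1_norm (pCons 0 q) = (\<Sum>i\<le>Suc (degree q). \<bar>coeff (pCons 0 q) i\<bar>)"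
    by (rule l1_ext) (rule degree_pCons_le)
  also have "\<dots> = (\<Sum>i\<le>degree q. \<bar>coeff q i\<bar>)"
    by (subst sum.atMost_Suc_shift) simp
  finally show ?thesis by (simp add: l1_norm_def)
qed

lemma l1_x: "l1_norm (smult 2 [:0, c:] * p) = 2 * \<bar>c\<bar> * l1_norm p"
proof -
  have "smult 2 [:0, c:] * p = pCons 0 (smult (2 * c) p)" by simp
  then show ?thesis by (simp add: l1_pCons0 l1_smult abs_mult)
qed

lemma Q_l1: "c > 0 \<Longrightarrow> l1_norm (Q c n) \<le> S c n"
proof (induction c n rule: Q.induct)
  case (1 c)
  then show ?case by (simp add: l1_norm_def)
next
  case (2 c)
  then show ?case by (simp add: l1_norm_def)
next
  case (3 c n)
  have "l1_norm (Q c (Suc (Suc n))) \<le> l1_norm (smult 2 [:0, c:] * Q c (Suc n)) + l1_norm (Q c n)"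
    by (simp only: Q.simps) (rule l1_diff)
  also have "\<dots> = 2 * c * l1_norm (Q c (Suc n)) + l1_norm (Q c n)" using 3(3) by (simp only: l1_x)
  also have "\<dots> \<le> 2 * c * S c (Suc n) + S c n"
    using 3 by (intro add_mono mult_left_mono) auto
  finally show ?case by simp
qed

lemma sup_nonneg:
  assumes "rho \<ge> 0"
  shows "Sup ((\<lambda>x. \<bar>poly p x\<bar>) ` {0..rho}) \<ge> (0::real)"
proof -
  have "compact ((\<lambda>x. \<bar>poly p x\<bar>) ` {0..rho})"
    by (intro compact_continuous_image continuous_intros) auto
  then have "bdd_above ((\<lambda>x. \<bar>poly p x\<bar>) ` {0..rho})"
    by (intro bounded_imp_bdd_above compact_imp_bounded)
  moreover have "\<bar>poly p 0\<bar> \<in> (\<lambda>x. \<bar>poly p x\<bar>) ` {0..rho}" using assms by auto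
  ultimately show ?thesis by (intro cSup_upper2[of "\<bar>poly p 0\<bar>"]) auto
qed

theorem proposition4:
  fixes rho :: real and k :: nat
  assumes "0 < rho" "rho < 1" "k \<ge> 1"
  defines "beta \<equiv> (sqrt (1 + rho) - sqrt (1 - rho)) / (sqrt (1 + rho) + sqrt (1 - rho))"
  defines "rho1 \<equiv> 2 * beta ^ k / (1 + beta ^ (2 * k))"
  defines "C1 \<equiv> rho1 / (2 * rho ^ k) *
              ((1 - sqrt (1 + rho\<^sup>2)) ^ k + (1 + sqrt (1 + rho\<^sup>2)) ^ k)"
  shows "tilde_rho k rho C1 \<le> rho1"
proof -
  define a where "a = sqrt (1 + rho)"
  define b where "b = sqrt (1 - rho)"
  have a2: "a^2 = 1 + rho" and b2: "b^2 = 1 - rho" using assms(1,2) by (simp_all add: a_def b_def)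
  have b0: "b > 0" using assms(2) by (simp add: b_def)
  have ab: "b < a" unfolding a_def b_def using assms(1) by simp
  have beta: "beta = (a - b) / (a + b)" by (simp add: beta_def a_def b_def)
  have beta0: "beta > 0" using ab b0 by (simp add: beta)
  have "beta^2 + 1 = 2 * beta / rho"
  proof -
    have "(a - b)^2 + (a + b)^2 = 2 * (a^2 + b^2)" by (simp add: power2_eq_square algebra_simps)
    also have "\<dots> = 4" using a2 b2 by simp
    finally have e1: "(a - b)^2 + (a + b)^2 = 4" .
    have e2: "(a - b) * (a + b) = 2 * rho" using a2 b2 by (simp add: power2_eq_square algebra_simps)
    have "beta^2 + 1 = ((a - b)^2 + (a + b)^2) / (a + b)^2"
      using ab b0 by (simp add: beta power_divide field_simps)
    also have "\<dots> = 4 / (a + b)^2" using e1 by simp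
    also have "\<dots> = 2 * ((a - b) * (a + b)) / rho / (a + b)^2" using e2 assms(1) by simp
    also have "\<dots> = 2 * beta / rho"
    proof -
      have "a + b > 0" using ab b0 by simp
      then have "a + b \<noteq> 0" "rho \<noteq> 0" using assms(1) by auto
      then show ?thesis unfolding beta power2_eq_square by (simp add: divide_simps)
    qed
    finally show ?thesis .
  qed
  then have sumb: "1 / beta + beta = 2 * (1 / rho) * 1"
    using beta0 assms(1) by (simp add: power2_eq_square field_simps)
  have bk: "beta ^ k > 0" using beta0 by simp
  have rho1_pos: "rho1 > 0" unfolding rho1_def using bk beta0 by (intro divide_pos_pos) (auto intro: add_pos_nonneg)
  define p where "p = smult rho1 (Q (1 / rho) k)"
  have deg: "degree p \<le> k" unfolding p_def using Q_degree[of "1/rho" k] degree_smult_le le_trans by blast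
  have "poly (Q (1/rho) k) 1 = ((1 / beta) ^ k + beta ^ k) / 2"
    by (rule Q_closed[OF sumb]) (use beta0 in simp)
  then have p1: "poly p 1 = 1"
  proof -
    define y where "y = beta ^ k"
    have y0: "y > 0" using bk by (simp add: y_def)
    have P: "poly (Q (1/rho) k) 1 = (1 / y + y) / 2" using \<open>poly (Q (1/rho) k) 1 = _\<close>
      by (simp add: y_def power_one_over)
    have r: "rho1 = 2 * y / (1 + y * y)" by (simp add: rho1_def y_def power_mult power2_eq_square power_mult_distrib)
    have "1 + y * y > 0" using y0 by (simp add: add_pos_nonneg)
    moreover have "y * 2 + y * (y * (y * 2)) > 0" using y0 by (simp add: add_pos_pos)
    ultimately show ?thesis unfolding p_def using y0 by (simp add: P r field_simps)
  qed
  define w where "w = sqrt (1 + rho^2)"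
  have w2: "w^2 = 1 + rho^2" by (simp add: w_def)
  have Sk: "S (1/rho) k = ((1 + w) / rho) ^ k / 2 + ((1 - w) / rho) ^ k / 2"
  proof -
    have "S (1/rho) k = (((1 + w) / rho) ^ k + ((1 - w) / rho) ^ k) / 2"
    proof (rule S_closed)
      show "(1 + w) / rho + (1 - w) / rho = 2 * (1 / rho)" by (simp add: add_divide_distrib[symmetric])
      have "(1 + w) * (1 - w) = - (rho^2)" using w2 by (simp add: power2_eq_square algebra_simps)
      then show "(1 + w) / rho * ((1 - w) / rho) = -1" using assms(1) by (simp add: power2_eq_square field_simps)
    qed
    then show ?thesis by simp
  qed
  have l1: "l1_norm p \<le> C1"
  proof -
    have "l1_norm p = rho1 * l1_norm (Q (1/rho) k)" unfolding p_def using rho1_pos by (simp add: l1_smult)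
    also have "\<dots> \<le> rho1 * S (1/rho) k" using rho1_pos Q_l1[of "1/rho" k] assms(1) by simp
    also have "\<dots> = C1" unfolding C1_def Sk w_def using assms(1) by (simp add: power_divide field_simps)
    finally show ?thesis .
  qed
  have supp: "Sup ((\<lambda>x. \<bar>poly p x\<bar>) ` {0..rho}) \<le> rho1"
  proof (rule cSUP_least)
    show "{0..rho} \<noteq> {}" using assms(1) by simp
  next
    fix x assume x: "x \<in> {0..rho}"
    then have "-1 \<le> x / rho" "x / rho \<le> 1" using assms(1) by (auto simp: divide_simps)
    then have c: "1 / rho * x = cos (arccos (x / rho))" by (simp add: cos_arccos)
    have "\<bar>poly p x\<bar> = rho1 * \<bar>cos (real k * arccos (x / rho))\<bar>"
      unfolding p_def using Q_cos[OF c, of k] rho1_pos by (simp add: abs_mult)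
    also have "\<dots> \<le> rho1 * 1" using rho1_pos by (intro mult_left_mono) auto
    finally show "\<bar>poly p x\<bar> \<le> rho1" by simp
  qed
  show ?thesis unfolding tilde_rho_def
  proof (rule cInf_lower2[OF _ supp])
    show "Sup ((\<lambda>x. \<bar>poly p x\<bar>) ` {0..rho}) \<in> {Sup ((\<lambda>x. \<bar>poly p x\<bar>) ` {0..rho}) | p.
            degree p \<le> k \<and> poly p 1 = 1 \<and> l1_norm p \<le> C1}" using deg p1 l1 by blast
    show "bdd_below {Sup ((\<lambda>x. \<bar>poly p x\<bar>) ` {0..rho}) | p.
            degree p \<le> k \<and> poly p 1 = 1 \<and> l1_norm p \<le> C1}"
      using sup_nonneg[of rho] assms(1) by (intro bdd_belowI[of _ 0]) auto
  qed
qed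

end
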